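(* Let $\widetilde C,\widetilde C',\widetilde C''$ be $r$-perfect $\mathcal S$-complexes, and let $\widetilde\lambda:\widetilde C\to\widetilde C'$ and $\widetilde\lambda':\widetilde C'\to\widetilde C''$ be height $n$ and height $m$ morphisms respectively ($n,m\ge0$). Then $\widetilde\lambda'\widetilde\lambda$ is a height $n+m$ morphism. If moreover $\widetilde\lambda$ is strong height $n$ and $\widetilde\lambda'$ is strong height $m$, then $\widetilde\lambda'\widetilde\lambda$ is strong height $n+m$.
   Context: Let $R$ be a commutative ring; graded modules are $\mathbb Z$-graded, $V[i]_j=V_{i+j}$, differentials have degree $-1$. An $\mathcal S$-complex over $R$ is a chain complex $(\widetilde C,\widetilde d)$ of finitely generated free graded $R$-modules with a graded decomposition $\widetilde C=C\oplus C[-1]\oplus\mathsf R$ in which $\widetilde d=\begin{pmatrix} d&0&0\\ v&-d&\delta_2\\ \delta_1&0&r\end{pmatrix}$; it is $r$-perfect if $\mathsf R$ is supported in even degrees (so $r=0$). A degree $k$ morphism is an $R$-linear map of degree $k$ of the form $\begin{pmatrix}\lambda&0&0\\ \mu&\lambda&\Delta_2\\ \Delta_1&0&\rho\end{pmatrix}$ with $\widetilde d'\widetilde\lambda=\widetilde\lambda\widetilde d$; composition is composition of maps. For such a morphism between $r$-perfect complexes set $\tau_0=\rho$ and for $i\ge0$, $\tau_{i+1}=\delta_1'v'^i\Delta_2+\Delta_1v^i\delta_2+\sum_{j=0}^{i-1}\delta_1'v'^j\mu v^{i-1-j}\delta_2$. A height $n$ morphism ($n\ge0$) is an even degree morphism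 between $r$-perfect $\mathcal S$-complexes with $\tau_j=0$ for all $0\le j<n$; it is strong height $n$ if in addition $\tau_n$ is an isomorphism. *)

theory Defs
  imports "Jordan_Normal_Form.Matrix"
begin

text \<open>The ground ring is a commutative ring with unit ('a :: comm_ring_1),
concentrated in degree 0.  A finitely generated free graded module is a finite direct sum
of shifted copies of the ring; it is encoded by the list of degrees of a homogeneous basis.
An R-linear map of degree k between such modules is a matrix (rows = target basis,
columns = source basis) whose (i,j) entry vanishes unless deg target_i = deg source_j + k.\<close>

definition graded_map :: "int \<Rightarrow> int list \<Rightarrow> int list \<Rightarrow> 'a :: zero mat \<Rightarrow> bool" where
  "graded_map k ds dt M \<longleftrightarrow> M \<in> carrier_mat (length dt) (length ds) \<and>
     (\<forall>i < length dt. \<forall>j < length ds. M $$ (i, j) \<noteq> 0 \<longrightarrow> dt ! i = ds ! j + k)"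

definition blk :: "'a mat \<Rightarrow> nat \<Rightarrow> nat \<Rightarrow> nat \<Rightarrow> nat \<Rightarrow> 'a mat" where
  "blk M r0 nr c0 nc = mat nr nc (\<lambda>(i, j). M $$ (r0 + i, c0 + j))"

text \<open>An S-complex is given by (degrees of a basis of C, degrees of a basis of R, differential
of the total module  C \<oplus> C[-1] \<oplus> R).  Since C[-1]_j = C_(j-1), a basis element of C of degree d
sits in degree d+1 in C[-1].  The total basis is ordered: C, then C[-1], then R.\<close>
type_synonym 'a scx = "int list \<times> int list \<times> 'a mat"

definition cdeg :: "'a scx \<Rightarrow> int list" where "cdeg X = fst X"
definition rdeg :: "'a scx \<Rightarrow> int list" where "rdeg X = fst (snd X)"
definition dif :: "'a scx \<Rightarrow> 'a mat" where "dif X = snd (snd X)"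

definition nC :: "'a scx \<Rightarrow> nat" where "nC X = length (cdeg X)"
definition nR :: "'a scx \<Rightarrow> nat" where "nR X = length (rdeg X)"

definition totdeg :: "'a scx \<Rightarrow> int list" where
  "totdeg X = cdeg X @ map (\<lambda>d. d + 1) (cdeg X) @ rdeg X"

text \<open>Blocks (row block, column block) with indices 0 = C, 1 = C[-1], 2 = R.\<close>
definition bsize :: "'a scx \<Rightarrow> nat \<Rightarrow> nat" where
  "bsize X b = (if b = 2 then nR X else nC X)"
definition boff :: "'a scx \<Rightarrow> nat \<Rightarrow> nat" where
  "boff X b = (if b = 0 then 0 else if b = 1 then nC X else 2 * nC X)"

definition mblk :: "'a scx \<Rightarrow> 'a scx \<Rightarrow> 'a mat \<Rightarrow> nat \<Rightarrow> nat \<Rightarrow> 'a mat" where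
  "mblk Y X M a b = blk M (boff Y a) (bsize Y a) (boff X b) (bsize X b)"

definition d_of :: "'a scx \<Rightarrow> 'a mat" where "d_of X = mblk X X (dif X) 0 0"
definition v_of :: "'a scx \<Rightarrow> 'a mat" where "v_of X = mblk X X (dif X) 1 0"
definition delta2_of :: "'a scx \<Rightarrow> 'a mat" where "delta2_of X = mblk X X (dif X) 1 2"
definition delta1_of :: "'a scx \<Rightarrow> 'a mat" where "delta1_of X = mblk X X (dif X) 2 0"

definition S_complex :: "'a :: comm_ring_1 scx \<Rightarrow> bool" where
  "S_complex X \<longleftrightarrow>
     graded_map (-1) (totdeg X) (totdeg X) (dif X) \<and>
     dif X * dif X = 0\<^sub>m (length (totdeg X)) (length (totdeg X)) \<and>
     mblk X X (dif X) 0 1 = 0\<^sub>m (nC X) (nC X) \<and>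
     mblk X X (dif X) 0 2 = 0\<^sub>m (nC X) (nR X) \<and>
     mblk X X (dif X) 2 1 = 0\<^sub>m (nR X) (nC X) \<and>
     mblk X X (dif X) 1 1 = - d_of X"

definition r_perfect :: "'a :: comm_ring_1 scx \<Rightarrow> bool" where
  "r_perfect X \<longleftrightarrow> S_complex X \<and> (\<forall>e \<in> set (rdeg X). even e)"

text \<open>A degree k morphism X \<rightarrow> Y: a degree k map of the total modules of the block form
(lambda,0,0; mu,lambda,Delta_2; Delta_1,0,rho) commuting with the differentials.\<close>
definition S_morphism :: "int \<Rightarrow> 'a :: comm_ring_1 scx \<Rightarrow> 'a scx \<Rightarrow> 'a mat \<Rightarrow> bool" where
  "S_morphism k X Y L \<longleftrightarrow>
     S_complex X \<and> S_complex Y \<and>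
     graded_map k (totdeg X) (totdeg Y) L \<and>
     dif Y * L = L * dif X \<and>
     mblk Y X L 0 1 = 0\<^sub>m (nC Y) (nC X) \<and>
     mblk Y X L 0 2 = 0\<^sub>m (nC Y) (nR X) \<and>
     mblk Y X L 2 1 = 0\<^sub>m (nR Y) (nC X) \<and>
     mblk Y X L 1 1 = mblk Y X L 0 0"

definition mu_of :: "'a scx \<Rightarrow> 'a scx \<Rightarrow> 'a mat \<Rightarrow> 'a mat" where "mu_of X Y L = mblk Y X L 1 0"
definition Delta2_of :: "'a scx \<Rightarrow> 'a scx \<Rightarrow> 'a mat \<Rightarrow> 'a mat" where "Delta2_of X Y L = mblk Y X L 1 2"
definition Delta1_of :: "'a scx \<Rightarrow> 'a scx \<Rightarrow> 'a mat \<Rightarrow> 'a mat" where "Delta1_of X Y L = mblk Y X L 2 0"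
definition rho_of :: "'a scx \<Rightarrow> 'a scx \<Rightarrow> 'a mat \<Rightarrow> 'a mat" where "rho_of X Y L = mblk Y X L 2 2"

fun tau :: "nat \<Rightarrow> 'a :: comm_ring_1 scx \<Rightarrow> 'a scx \<Rightarrow> 'a mat \<Rightarrow> 'a mat" where
  "tau 0 X Y L = rho_of X Y L"
| "tau (Suc i) X Y L =
     delta1_of Y * (v_of Y ^\<^sub>m i) * Delta2_of X Y L
     + Delta1_of X Y L * (v_of X ^\<^sub>m i) * delta2_of X
     + mat (nR Y) (nR X) (\<lambda>(a, b). \<Sum>j < i.
          (delta1_of Y * (v_of Y ^\<^sub>m j) * mu_of X Y L * (v_of X ^\<^sub>m (i - 1 - j)) * delta2_of X) $$ (a, b))"

definition iso_mat :: "'a :: comm_ring_1 mat \<Rightarrow> bool" where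
  "iso_mat A \<longleftrightarrow> (\<exists>B \<in> carrier_mat (dim_col A) (dim_row A).
       A * B = 1\<^sub>m (dim_row A) \<and> B * A = 1\<^sub>m (dim_col A))"

definition height_mor :: "nat \<Rightarrow> 'a :: comm_ring_1 scx \<Rightarrow> 'a scx \<Rightarrow> 'a mat \<Rightarrow> bool" where
  "height_mor n X Y L \<longleftrightarrow> r_perfect X \<and> r_perfect Y \<and>
     (\<exists>k. even k \<and> S_morphism k X Y L) \<and>
     (\<forall>j < n. tau j X Y L = 0\<^sub>m (nR Y) (nR X))"

definition strong_height_mor :: "nat \<Rightarrow> 'a :: comm_ring_1 scx \<Rightarrow> 'a scx \<Rightarrow> 'a mat \<Rightarrow> bool" where
  "strong_height_mor n X Y L \<longleftrightarrow> height_mor n X Y L \<and> iso_mat (tau n X Y L)"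

end

theory Submission imports Defs begin

lemma mA: "dim_col A = dim_row B \<Longrightarrow> dim_col B = dim_row C \<Longrightarrow> A * B * C = A * (B * C)"
  by (rule assoc_mult_mat[of A "dim_row A" "dim_col A" B "dim_col B" C "dim_col C"]) auto
lemma dL: "dim_col A = dim_row B \<Longrightarrow> dim_row C = dim_row B \<Longrightarrow> dim_col C = dim_col B \<Longrightarrow>
   A * (B + C) = A * B + A * C"
  by (rule mult_add_distrib_mat[of A "dim_row A" "dim_col A" B "dim_col B"]) auto
lemma dR: "dim_row A = dim_row B \<Longrightarrow> dim_col A = dim_col B \<Longrightarrow> dim_col A = dim_row C \<Longrightarrow>
   (A + B) * C = A * C + B * C"
  by (rule add_mult_distrib_mat[of A "dim_row A" "dim_col A" B C "dim_col C"]) auto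
lemma pow_Suc_left: "dim_row A = dim_col A \<Longrightarrow> A ^\<^sub>m Suc k = A * A ^\<^sub>m k"
proof (induct k)
  case 0 then show ?case by simp
next
  case (Suc k)
  have "A ^\<^sub>m Suc (Suc k) = A ^\<^sub>m Suc k * A" by simp
  also have "\<dots> = A * A ^\<^sub>m k * A" using Suc by simp
  also have "\<dots> = A * (A ^\<^sub>m k * A)" using Suc by (subst mA) auto
  finally show ?case by simp
qed
lemma aA: "dim_row A = dim_row B \<Longrightarrow> dim_col A = dim_col B \<Longrightarrow> dim_row B = dim_row C \<Longrightarrow>
  dim_col B = dim_col C \<Longrightarrow> A + B + C = A + (B + (C :: 'a :: semigroup_add mat))"
  by (intro eq_matI) (auto simp: add.assoc)
lemma zadd: "dim_row A = p \<Longrightarrow> dim_col A = q \<Longrightarrow> 0\<^sub>m p q + A = (A :: 'a :: monoid_add mat)"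
  by (intro eq_matI) auto
lemma addz: "dim_row A = p \<Longrightarrow> dim_col A = q \<Longrightarrow> A + 0\<^sub>m p q = (A :: 'a :: monoid_add mat)"
  by (intro eq_matI) auto

lemma mat_eqE: "A = B \<Longrightarrow> A $$ (i, j) = B $$ (i, j)" by simp

lemma mat_eq_entries: "dim_row A = p \<Longrightarrow> dim_col A = q \<Longrightarrow> dim_row B = p \<Longrightarrow> dim_col B = q \<Longrightarrow>
  (\<And>i j. i < p \<Longrightarrow> j < q \<Longrightarrow> A $$ (i, j) = B $$ (i, j)) \<Longrightarrow> A = B"
  by (intro eq_matI) auto

definition msum :: "nat \<Rightarrow> nat \<Rightarrow> (nat \<Rightarrow> 'a :: comm_monoid_add mat) \<Rightarrow> nat set \<Rightarrow> 'a mat" where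
  "msum nr nc f A = mat nr nc (\<lambda>(i, j). \<Sum>x\<in>A. f x $$ (i, j))"

lemma msum_dims[simp]: "dim_row (msum nr nc f A) = nr" "dim_col (msum nr nc f A) = nc"
  by (auto simp: msum_def)

lemma msum_mult_right:
  assumes "\<And>x. x \<in> A \<Longrightarrow> f x \<in> carrier_mat nr m" and "B \<in> carrier_mat m nc"
  shows "msum nr m f A * B = msum nr nc (\<lambda>x. f x * B) A"
proof (rule eq_matI)
  fix i j assume i: "i < dim_row (msum nr nc (\<lambda>x. f x * B) A)" and j: "j < dim_col (msum nr nc (\<lambda>x. f x * B) A)"
  then have i: "i < nr" and j: "j < nc" by auto
  have "(msum nr m f A * B) $$ (i, j) = (\<Sum>l<m. (\<Sum>x\<in>A. f x $$ (i, l)) * B $$ (l, j))"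
    using i j assms(2) by (simp add: msum_def scalar_prod_def atLeast0LessThan)
  also have "\<dots> = (\<Sum>x\<in>A. \<Sum>l<m. f x $$ (i, l) * B $$ (l, j))"
    by (simp add: sum_distrib_right sum.swap[of _ A])
  also have "\<dots> = msum nr nc (\<lambda>x. f x * B) A $$ (i, j)"
  proof -
    have "\<And>x. x \<in> A \<Longrightarrow> (\<Sum>l<m. f x $$ (i, l) * B $$ (l, j)) = (f x * B) $$ (i, j)"
    proof -
      fix x assume "x \<in> A"
      then have "f x \<in> carrier_mat nr m" by (rule assms(1))
      with i j assms(2) show "(\<Sum>l<m. f x $$ (i, l) * B $$ (l, j)) = (f x * B) $$ (i, j)"
        by (simp add: scalar_prod_def atLeast0LessThan)
    qed
    then show ?thesis using i j by (simp add: msum_def)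
  qed
  finally show "(msum nr m f A * B) $$ (i, j) = msum nr nc (\<lambda>x. f x * B) A $$ (i, j)" .
qed (use assms in auto)

lemma msum_mult_left:
  assumes "\<And>x. x \<in> A \<Longrightarrow> f x \<in> carrier_mat m nc" and "B \<in> carrier_mat nr m"
  shows "B * msum m nc f A = msum nr nc (\<lambda>x. B * f x) A"
proof (rule eq_matI)
  fix i j assume i: "i < dim_row (msum nr nc (\<lambda>x. B * f x) A)" and j: "j < dim_col (msum nr nc (\<lambda>x. B * f x) A)"
  then have i: "i < nr" and j: "j < nc" by auto
  have "(B * msum m nc f A) $$ (i, j) = (\<Sum>l<m. B $$ (i, l) * (\<Sum>x\<in>A. f x $$ (l, j)))"
    using i j assms(2) by (simp add: msum_def scalar_prod_def atLeast0LessThan)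
  also have "\<dots> = (\<Sum>x\<in>A. \<Sum>l<m. B $$ (i, l) * f x $$ (l, j))"
    by (simp add: sum_distrib_left sum.swap[of _ A])
  also have "\<dots> = msum nr nc (\<lambda>x. B * f x) A $$ (i, j)"
  proof -
    have "\<And>x. x \<in> A \<Longrightarrow> (\<Sum>l<m. B $$ (i, l) * f x $$ (l, j)) = (B * f x) $$ (i, j)"
    proof -
      fix x assume "x \<in> A"
      then have "f x \<in> carrier_mat m nc" by (rule assms(1))
      with i j assms(2) show "(\<Sum>l<m. B $$ (i, l) * f x $$ (l, j)) = (B * f x) $$ (i, j)"
        by (simp add: scalar_prod_def atLeast0LessThan)
    qed
    then show ?thesis using i j by (simp add: msum_def)
  qed
  finally show "(B * msum m nc f A) $$ (i, j) = msum nr nc (\<lambda>x. B * f x) A $$ (i, j)" .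
qed (use assms in auto)

lemma msum_add:
  assumes "\<And>x. x \<in> A \<Longrightarrow> f x \<in> carrier_mat nr nc" "\<And>x. x \<in> A \<Longrightarrow> g x \<in> carrier_mat nr nc"
  shows "msum nr nc (\<lambda>x. f x + g x) A = msum nr nc f A + msum nr nc g A"
proof (rule eq_matI)
  fix i j assume "i < dim_row (msum nr nc f A + msum nr nc g A)" "j < dim_col (msum nr nc f A + msum nr nc g A)"
  then have i: "i < nr" "j < nc" by auto
  have "\<And>x. x \<in> A \<Longrightarrow> (f x + g x) $$ (i, j) = f x $$ (i, j) + g x $$ (i, j)"
  proof -
    fix x assume "x \<in> A"
    then have "f x \<in> carrier_mat nr nc" "g x \<in> carrier_mat nr nc" by (auto intro: assms)
    with i show "(f x + g x) $$ (i, j) = f x $$ (i, j) + g x $$ (i, j)" by simp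
  qed
  then show "msum nr nc (\<lambda>x. f x + g x) A $$ (i, j) = (msum nr nc f A + msum nr nc g A) $$ (i, j)"
    using i by (simp add: msum_def sum.distrib)
qed (use assms in auto)

lemma msum_insert:
  assumes "finite A" "x \<notin> A" "f x \<in> carrier_mat nr nc"
  shows "msum nr nc f (insert x A) = f x + msum nr nc f A"
  using assms by (intro eq_matI) (auto simp: msum_def)

lemma msum_cong: "(\<And>x. x \<in> A \<Longrightarrow> f x = g x) \<Longrightarrow> msum nr nc f A = msum nr nc g A"
  unfolding msum_def by (intro eq_matI) auto

lemma msum_Suc:
  assumes "f (Suc k) \<in> carrier_mat nr nc"
  shows "msum nr nc f {..Suc k} = f (Suc k) + msum nr nc f {..k}"
  using msum_insert[of "{..k}" "Suc k" f nr nc] assms by (simp add: atMost_Suc)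

lemma msum_zero: "(\<And>x. x \<in> A \<Longrightarrow> f x = 0\<^sub>m nr nc) \<Longrightarrow> msum nr nc f A = 0\<^sub>m nr nc"
  unfolding msum_def by (intro eq_matI) auto

lemma msum_single:
  assumes "finite A" "y \<in> A" "\<And>x. x \<in> A \<Longrightarrow> x \<noteq> y \<Longrightarrow> f x = 0\<^sub>m nr nc" "f y \<in> carrier_mat nr nc"
  shows "msum nr nc f A = f y"
proof (rule eq_matI)
  fix i j assume "i < dim_row (f y)" "j < dim_col (f y)"
  then have i: "i < nr" "j < nc" using assms(4) by auto
  have "(\<Sum>x\<in>A. f x $$ (i, j)) = f y $$ (i, j)"
    using assms i by (subst sum.remove[of A y]) (auto intro!: sum.neutral)
  then show "msum nr nc f A $$ (i, j) = f y $$ (i, j)" using i by (simp add: msum_def)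
qed (use assms in auto)


locale cxa =
  fixes n r :: nat and d v e1 e2 :: "'a::comm_ring_1 mat"
  assumes d_c: "d \<in> carrier_mat n n" and v_c: "v \<in> carrier_mat n n"
    and e1_c: "e1 \<in> carrier_mat r n" and e2_c: "e2 \<in> carrier_mat n r"
    and dv: "d * v = v * d + e2 * e1" and e1d: "e1 * d = 0\<^sub>m r n" and de2: "d * e2 = 0\<^sub>m n r"
    and odd: "\<And>i. e1 * v ^\<^sub>m i * e2 = 0\<^sub>m r r"
begin
lemma dims[simp]: "dim_row d = n" "dim_col d = n" "dim_row v = n" "dim_col v = n"
  "dim_row e1 = r" "dim_col e1 = n" "dim_row e2 = n" "dim_col e2 = r"
  using d_c v_c e1_c e2_c by auto

lemma a_d: "e1 * v ^\<^sub>m i * d = 0\<^sub>m r n"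
proof (induct i)
  case 0 then show ?case using e1d by simp
next
  case (Suc i)
  have p: "e1 * v ^\<^sub>m Suc i * d = e1 * v ^\<^sub>m i * (v * d)" by (simp add: mA)
  have h: "e1 * v ^\<^sub>m i * (d * v) = e1 * v ^\<^sub>m i * (v * d) + e1 * v ^\<^sub>m i * (e2 * e1)"
    by (simp add: dv dL)
  have z1: "e1 * v ^\<^sub>m i * (d * v) = 0\<^sub>m r n"
  proof -
    have "e1 * v ^\<^sub>m i * (d * v) = e1 * v ^\<^sub>m i * d * v" by (simp add: mA)
    then show ?thesis using Suc by simp
  qed
  have z2: "e1 * v ^\<^sub>m i * (e2 * e1) = 0\<^sub>m r n"
  proof -
    have "e1 * v ^\<^sub>m i * (e2 * e1) = e1 * v ^\<^sub>m i * e2 * e1" by (simp add: mA)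
    then show ?thesis using odd by simp
  qed
  show ?case using h z1 z2 p by (simp add: addz)
qed

lemma e1_b: "e1 * (v ^\<^sub>m i * e2) = 0\<^sub>m r r"
  using odd[of i] by (simp add: mA)

lemma vpow_comm: "v * v ^\<^sub>m i = v ^\<^sub>m i * v"
  using pow_Suc_left[of v i] by simp

lemma vb: "v * (v ^\<^sub>m i * e2) = v ^\<^sub>m Suc i * e2"
proof -
  have "v * (v ^\<^sub>m i * e2) = v * v ^\<^sub>m i * e2" by (simp add: mA)
  then show ?thesis by (simp add: vpow_comm)
qed

lemma d_b: "d * (v ^\<^sub>m i * e2) = 0\<^sub>m n r"
proof (induct i)
  case 0 then show ?case using de2 by simp
next
  case (Suc i)
  have "d * (v ^\<^sub>m Suc i * e2) = d * v * (v ^\<^sub>m i * e2)" by (simp only: vb[symmetric]) (simp add: mA)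
  also have "\<dots> = v * (d * (v ^\<^sub>m i * e2)) + e2 * (e1 * (v ^\<^sub>m i * e2))"
    by (simp add: dv dR mA)
  also have "\<dots> = 0\<^sub>m n r" using Suc e1_b by (simp add: addz)
  finally show ?case .
qed
end


lemma msum_sing: "f x \<in> carrier_mat nr nc \<Longrightarrow> msum nr nc f {x} = f x"
  by (rule msum_single) auto

fun SS :: "'a::comm_ring_1 mat \<Rightarrow> 'a mat \<Rightarrow> 'a mat \<Rightarrow> 'a mat \<Rightarrow> 'a mat \<Rightarrow> nat \<Rightarrow> 'a mat" where
  "SS e1' v' D1 v mu 0 = D1"
| "SS e1' v' D1 v mu (Suc k) = SS e1' v' D1 v mu k * v + e1' * v' ^\<^sub>m k * mu"

fun TT :: "'a::comm_ring_1 mat \<Rightarrow> 'a mat \<Rightarrow> 'a mat \<Rightarrow> 'a mat \<Rightarrow> 'a mat \<Rightarrow> 'a mat \<Rightarrow> 'a mat \<Rightarrow> 'a mat \<Rightarrow> nat \<Rightarrow> 'a mat" where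
  "TT e1' v' D2 D1 v e2 mu rho 0 = rho"
| "TT e1' v' D2 D1 v e2 mu rho (Suc k) = e1' * v' ^\<^sub>m k * D2 + SS e1' v' D1 v mu k * e2"

lemma SS_dims[simp]: "dim_row D1 = dim_row e1' \<Longrightarrow> dim_row (SS e1' v' D1 v mu k) = dim_row e1'"
  "dim_col D1 = dim_col mu \<Longrightarrow> dim_col (SS e1' v' D1 v mu k) = dim_col mu"
  by (induct k) auto

locale mora = X: cxa n r d v e1 e2 + Y: cxa n' r' d' v' e1' e2'
  for n r :: nat and d v e1 e2 :: "'a::comm_ring_1 mat" and n' r' :: nat and d' v' e1' e2' :: "'a mat" +
  fixes l mu D1 D2 rho :: "'a mat"
  assumes l_c: "l \<in> carrier_mat n' n" and mu_c: "mu \<in> carrier_mat n' n"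
    and D1_c: "D1 \<in> carrier_mat r' n" and D2_c: "D2 \<in> carrier_mat n' r" and rho_c: "rho \<in> carrier_mat r' r"
    and E4: "e1' * l = D1 * d + rho * e1"
    and E2: "v' * l + e2' * D1 = mu * d + l * v + D2 * e1 + d' * mu"
    and E3: "l * e2 + d' * D2 = e2' * rho"
begin
lemma mdims[simp]: "dim_row l = n'" "dim_col l = n" "dim_row mu = n'" "dim_col mu = n"
  "dim_row D1 = r'" "dim_col D1 = n" "dim_row D2 = n'" "dim_col D2 = r"
  "dim_row rho = r'" "dim_col rho = r"
  using l_c mu_c D1_c D2_c rho_c by auto

abbreviation S where "S \<equiv> SS e1' v' D1 v mu"
abbreviation T where "T \<equiv> TT e1' v' D2 D1 v e2 mu rho"

lemma S_dims[simp]: "dim_row (S k) = r'" "dim_col (S k) = n"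
  by (induct k) auto
lemma T_dims[simp]: "dim_row (T k) = r'" "dim_col (T k) = r"
  by (cases k; simp)+
lemma S_c[simp]: "S k \<in> carrier_mat r' n" by (rule carrier_matI) auto
lemma T_c[simp]: "T k \<in> carrier_mat r' r" by (rule carrier_matI) auto

lemma lemA: "e1' * v' ^\<^sub>m i * l = msum r' n (\<lambda>j. T j * (e1 * v ^\<^sub>m (i - j))) {..i} + S i * d"
proof (induct i)
  case 0
  have "msum r' n (\<lambda>j. T j * (e1 * v ^\<^sub>m (0 - j))) {..0} = rho * e1"
  proof -
    have c: "T 0 * (e1 * v ^\<^sub>m (0 - 0)) \<in> carrier_mat r' n" by (rule carrier_matI) auto
    have "{..0::nat} = {0}" by auto
    then show ?thesis using msum_sing[of "\<lambda>j. T j * (e1 * v ^\<^sub>m (0 - j))" 0, OF c] by simp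
  qed
  moreover have "D1 * d + rho * e1 = rho * e1 + D1 * d"
    by (rule mat_eq_entries[of _ r' n]) (simp_all add: ac_simps)
  ultimately show ?case using E4 by simp
next
  case (Suc i)
  define a where "a = e1' * v' ^\<^sub>m i"
  define M where "M = msum r' n (\<lambda>j. T j * (e1 * v ^\<^sub>m (i - j))) {..i}"
  define M' where "M' = msum r' n (\<lambda>j. T j * (e1 * v ^\<^sub>m (Suc i - j))) {..i}"
  have ad[simp]: "dim_row a = r'" "dim_col a = n'" by (auto simp: a_def)
  have Md[simp]: "dim_row M = r'" "dim_col M = n" "dim_row M' = r'" "dim_col M' = n"
    by (auto simp: M_def M'_def)
  have IH: "a * l = M + S i * d" using Suc by (simp add: a_def M_def)
  have s1: "e1' * v' ^\<^sub>m Suc i * l = a * (v' * l)" by (simp add: a_def mA)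
  have ae2: "a * e2' = 0\<^sub>m r' r'" using Y.odd by (simp add: a_def)
  have ad': "a * d' = 0\<^sub>m r' n'" using Y.a_d by (simp add: a_def)
  have s2: "a * (v' * l + e2' * D1) = a * (mu * d + l * v + D2 * e1 + d' * mu)" using E2 by simp
  have s3: "a * (v' * l + e2' * D1) = a * (v' * l)"
  proof -
    have "a * (v' * l + e2' * D1) = a * (v' * l) + a * e2' * D1" by (simp add: dL mA)
    then show ?thesis using ae2 by (simp add: addz)
  qed
  have s4: "a * (mu * d + l * v + D2 * e1 + d' * mu) = a * mu * d + a * l * v + a * D2 * e1 + a * d' * mu"
    by (simp add: dL mA)
  have Mv: "M * v = M'"
  proof -
    have "M * v = msum r' n (\<lambda>j. T j * (e1 * v ^\<^sub>m (i - j)) * v) {..i}"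
      unfolding M_def by (rule msum_mult_right) (auto intro!: carrier_matI)
    also have "\<dots> = M'" unfolding M'_def
    proof (rule msum_cong)
      fix j assume "j \<in> {..i}"
      then have "Suc i - j = Suc (i - j)" by auto
      then show "T j * (e1 * v ^\<^sub>m (i - j)) * v = T j * (e1 * v ^\<^sub>m (Suc i - j))" by (simp add: mA)
    qed
    finally show ?thesis .
  qed
  have s5: "a * l * v = M' + S i * (v * d) + S i * (e2 * e1)"
  proof -
    have "a * l * v = (M + S i * d) * v" using IH by simp
    also have "\<dots> = M * v + S i * (d * v)" by (simp add: dR mA)
    also have "\<dots> = M' + S i * (v * d) + S i * (e2 * e1)" using Mv by (simp add: X.dv dL aA)
    finally show ?thesis .
  qed
  have lhs: "e1' * v' ^\<^sub>m Suc i * l = a * mu * d + (M' + S i * (v * d) + S i * (e2 * e1)) + a * D2 * e1"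
    using s1 s2 s3 s4 s5 ad' by (simp add: addz)
  have rhs: "msum r' n (\<lambda>j. T j * (e1 * v ^\<^sub>m (Suc i - j))) {..Suc i} + S (Suc i) * d
     = (a * D2 * e1 + S i * e2 * e1 + M') + (S i * v * d + a * mu * d)"
  proof -
    have "msum r' n (\<lambda>j. T j * (e1 * v ^\<^sub>m (Suc i - j))) {..Suc i} = T (Suc i) * (e1 * v ^\<^sub>m 0) + M'"
    proof -
      have c: "T (Suc i) * (e1 * v ^\<^sub>m (Suc i - Suc i)) \<in> carrier_mat r' n" by (rule carrier_matI) auto
      show ?thesis unfolding M'_def
        using msum_Suc[of "\<lambda>j. T j * (e1 * v ^\<^sub>m (Suc i - j))", OF c] by simp
    qed
    also have "\<dots> = a * D2 * e1 + S i * e2 * e1 + M'" by (simp add: a_def dR)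
    finally show ?thesis by (simp add: dR a_def)
  qed
  show ?case unfolding lhs rhs
    by (rule mat_eq_entries[of _ r' n]) (simp_all add: mA)
qed

lemma S_mul: "B \<in> carrier_mat n c \<Longrightarrow>
  S i * B = D1 * v ^\<^sub>m i * B + msum r' c (\<lambda>j. e1' * v' ^\<^sub>m j * mu * v ^\<^sub>m (i - 1 - j) * B) {..<i}"
proof (induct i arbitrary: B)
  case 0
  then have "msum r' c (\<lambda>j. e1' * v' ^\<^sub>m j * mu * v ^\<^sub>m (0 - 1 - j) * B) {..<0} = 0\<^sub>m r' c"
    by (intro msum_zero) auto
  then show ?case using 0 by (simp add: addz)
next
  case (Suc i)
  have vB: "v * B \<in> carrier_mat n c" using Suc by auto
  have Bd[simp]: "dim_row B = n" "dim_col B = c" using Suc by auto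
  define Q where "Q = msum r' c (\<lambda>j. e1' * v' ^\<^sub>m j * mu * v ^\<^sub>m (i - 1 - j) * (v * B)) {..<i}"
  define Q' where "Q' = msum r' c (\<lambda>j. e1' * v' ^\<^sub>m j * mu * v ^\<^sub>m (Suc i - 1 - j) * B) {..<i}"
  have Qd[simp]: "dim_row Q' = r'" "dim_col Q' = c" by (simp_all add: Q'_def)
  have QQ: "Q = Q'" unfolding Q_def Q'_def
  proof (rule msum_cong)
    fix j assume "j \<in> {..<i}"
    then have "Suc i - 1 - j = Suc (i - 1 - j)" by auto
    then show "e1' * v' ^\<^sub>m j * mu * v ^\<^sub>m (i - 1 - j) * (v * B) = e1' * v' ^\<^sub>m j * mu * v ^\<^sub>m (Suc i - 1 - j) * B"
      by (simp add: mA)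
  qed
  have "S (Suc i) * B = S i * (v * B) + e1' * v' ^\<^sub>m i * mu * B" by (simp add: dR mA)
  also have "\<dots> = D1 * v ^\<^sub>m i * (v * B) + Q + e1' * v' ^\<^sub>m i * mu * B"
    using Suc(1)[OF vB] by (simp add: Q_def)
  finally have lhs: "S (Suc i) * B = D1 * v ^\<^sub>m i * (v * B) + Q' + e1' * v' ^\<^sub>m i * mu * B" using QQ by simp
  have c: "e1' * v' ^\<^sub>m i * mu * v ^\<^sub>m (Suc i - 1 - i) * B \<in> carrier_mat r' c" by (rule carrier_matI) auto
  have "msum r' c (\<lambda>j. e1' * v' ^\<^sub>m j * mu * v ^\<^sub>m (Suc i - 1 - j) * B) {..<Suc i}
     = e1' * v' ^\<^sub>m i * mu * v ^\<^sub>m (Suc i - 1 - i) * B + Q'"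
    unfolding Q'_def lessThan_Suc by (rule msum_insert[of "{..<i}" i "\<lambda>j. e1' * v' ^\<^sub>m j * mu * v ^\<^sub>m (Suc i - 1 - j) * B", OF _ _ c]) auto
  then have rhs: "D1 * v ^\<^sub>m Suc i * B + msum r' c (\<lambda>j. e1' * v' ^\<^sub>m j * mu * v ^\<^sub>m (Suc i - 1 - j) * B) {..<Suc i}
     = D1 * v ^\<^sub>m i * (v * B) + (e1' * v' ^\<^sub>m i * mu * B + Q')"
    by (simp add: mA)
  show ?case unfolding lhs rhs
    by (rule mat_eq_entries[of _ r' c]) (simp_all add: ac_simps)
qed

lemma T_Suc: "T (Suc i) = e1' * v' ^\<^sub>m i * D2 + D1 * v ^\<^sub>m i * e2
   + msum r' r (\<lambda>j. e1' * v' ^\<^sub>m j * mu * v ^\<^sub>m (i - 1 - j) * e2) {..<i}"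
proof -
  have h: "S i * e2 = D1 * v ^\<^sub>m i * e2 + msum r' r (\<lambda>j. e1' * v' ^\<^sub>m j * mu * v ^\<^sub>m (i - 1 - j) * e2) {..<i}"
    using S_mul[of e2 r i] X.e2_c by simp
  show ?thesis by (simp add: h aA)
qed
end


locale comp3 = L: mora n r d v e1 e2 n' r' d' v' e1' e2' l mu D1 D2 rho
  + M: mora n' r' d' v' e1' e2' n'' r'' d'' v'' e1'' e2'' l' mu' D1' D2' rho'
  for n r :: nat and d v e1 e2 :: "'a::comm_ring_1 mat" and n' r' :: nat and d' v' e1' e2' :: "'a mat"
    and n'' r'' :: nat and d'' v'' e1'' e2'' :: "'a mat"
    and l mu D1 D2 rho l' mu' D1' D2' rho' :: "'a mat"
begin
abbreviation "muN \<equiv> mu' * l + l' * mu + D2' * D1"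
abbreviation "D1N \<equiv> D1' * l + rho' * D1"
abbreviation "D2N \<equiv> l' * D2 + D2' * rho"
abbreviation "rhoN \<equiv> rho' * rho"
abbreviation "SN \<equiv> SS e1'' v'' D1N v muN"
abbreviation "TN \<equiv> TT e1'' v'' D2N D1N v e2 muN rhoN"
abbreviation "SL \<equiv> SS e1' v' D1 v mu"
abbreviation "TL \<equiv> TT e1' v' D2 D1 v e2 mu rho"
abbreviation "SM \<equiv> SS e1'' v'' D1' v' mu'"
abbreviation "TM \<equiv> TT e1'' v'' D2' D1' v' e2' mu' rho'"

lemma SN_dims[simp]: "dim_row (SN k) = r''" "dim_col (SN k) = n"
  by (induct k) auto

lemma lemP: "SN k * (v ^\<^sub>m m * e2) = msum r'' r (\<lambda>j. TM j * (SL (k - j) * (v ^\<^sub>m m * e2))) {..k}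
    + SM k * (l * (v ^\<^sub>m m * e2))"
proof (induct k arbitrary: m)
  case 0
  define b where "b = v ^\<^sub>m m * e2"
  have bd[simp]: "dim_row b = n" "dim_col b = r" by (auto simp: b_def)
  have c: "TM 0 * (SL (0 - 0) * b) \<in> carrier_mat r'' r" by (rule carrier_matI) auto
  have "{..0::nat} = {0}" by auto
  then have ms: "msum r'' r (\<lambda>j. TM j * (SL (0 - j) * b)) {..0} = rho' * (D1 * b)"
    using msum_sing[of "\<lambda>j. TM j * (SL (0 - j) * b)" 0, OF c] by simp
  have "SN 0 * b = D1' * (l * b) + rho' * (D1 * b)" by (simp add: dR mA)
  also have "\<dots> = rho' * (D1 * b) + D1' * (l * b)"
    by (rule mat_eq_entries[of _ r'' r]) (simp_all add: ac_simps)
  finally show ?case using ms by (simp add: b_def)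
next
  case (Suc k)
  define b where "b = v ^\<^sub>m m * e2"
  define b1 where "b1 = v ^\<^sub>m Suc m * e2"
  define a2 where "a2 = e1'' * v'' ^\<^sub>m k"
  have bd[simp]: "dim_row b = n" "dim_col b = r" "dim_row b1 = n" "dim_col b1 = r" by (auto simp: b_def b1_def)
  have a2d[simp]: "dim_row a2 = r''" "dim_col a2 = n''" by (auto simp: a2_def)
  have vb: "v * b = b1" unfolding b_def b1_def by (rule L.X.vb)
  have db: "d * b = 0\<^sub>m n r" unfolding b_def by (rule L.X.d_b)
  have e1b: "e1 * b = 0\<^sub>m r r" unfolding b_def by (rule L.X.e1_b)
  define MA where "MA = msum r'' r (\<lambda>j. TM j * (e1' * v' ^\<^sub>m (k - j) * (mu * b))) {..k}"
  define MB where "MB = msum r'' r (\<lambda>j. TM j * (SL (k - j) * b1)) {..k}"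
  have MAd[simp]: "dim_row MA = r''" "dim_col MA = r" "dim_row MB = r''" "dim_col MB = r"
    by (auto simp: MA_def MB_def)
  have st1: "SN (Suc k) * b = SN k * b1 + a2 * (mu' * (l * b)) + a2 * (l' * (mu * b)) + a2 * (D2' * (D1 * b))"
    by (simp add: dR dL mA aA vb[symmetric] a2_def)
  have IH: "SN k * b1 = MB + SM k * (l * b1)" using Suc[of "Suc m"] by (simp add: MB_def b1_def)
  have st2: "a2 * (l' * (mu * b)) = MA + SM k * (d' * (mu * b))"
  proof -
    have "a2 * (l' * (mu * b)) = (a2 * l') * (mu * b)" by (simp add: mA)
    also have "\<dots> = (msum r'' n' (\<lambda>j. TM j * (e1' * v' ^\<^sub>m (k - j))) {..k} + SM k * d') * (mu * b)"
      by (simp add: a2_def M.lemA)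
    also have "\<dots> = msum r'' n' (\<lambda>j. TM j * (e1' * v' ^\<^sub>m (k - j))) {..k} * (mu * b) + SM k * (d' * (mu * b))"
      by (simp add: dR mA)
    also have "msum r'' n' (\<lambda>j. TM j * (e1' * v' ^\<^sub>m (k - j))) {..k} * (mu * b)
      = msum r'' r (\<lambda>j. TM j * (e1' * v' ^\<^sub>m (k - j)) * (mu * b)) {..k}"
      by (rule msum_mult_right) (auto intro!: carrier_matI)
    also have "\<dots> = MA" unfolding MA_def by (rule msum_cong) (simp add: mA)
    finally show ?thesis .
  qed
  have st3: "SM k * (v' * (l * b)) + SM k * (e2' * (D1 * b)) = SM k * (l * b1) + SM k * (d' * (mu * b))"
  proof -
    have "SM k * ((v' * l + e2' * D1) * b) = SM k * ((mu * d + l * v + D2 * e1 + d' * mu) * b)"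
      using L.E2 by simp
    moreover have "SM k * ((v' * l + e2' * D1) * b) = SM k * (v' * (l * b)) + SM k * (e2' * (D1 * b))"
      by (simp add: dR dL mA)
    moreover have "SM k * ((mu * d + l * v + D2 * e1 + d' * mu) * b) = SM k * (mu * (d * b)) + SM k * (l * (v * b))
       + SM k * (D2 * (e1 * b)) + SM k * (d' * (mu * b))"
      by (simp add: dR dL mA)
    ultimately show ?thesis using db e1b vb by (simp add: zadd addz)
  qed
  have rhs1: "msum r'' r (\<lambda>j. TM j * (SL (Suc k - j) * b)) {..Suc k}
     = TM (Suc k) * (SL 0 * b) + (MB + MA)"
  proof -
    have c: "TM (Suc k) * (SL (Suc k - Suc k) * b) \<in> carrier_mat r'' r" by (rule carrier_matI) auto
    have "msum r'' r (\<lambda>j. TM j * (SL (Suc k - j) * b)) {..Suc k}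
      = TM (Suc k) * (SL (Suc k - Suc k) * b) + msum r'' r (\<lambda>j. TM j * (SL (Suc k - j) * b)) {..k}"
      using msum_Suc[of "\<lambda>j. TM j * (SL (Suc k - j) * b)", OF c] by simp
    also have "msum r'' r (\<lambda>j. TM j * (SL (Suc k - j) * b)) {..k}
      = msum r'' r (\<lambda>j. TM j * (SL (k - j) * b1) + TM j * (e1' * v' ^\<^sub>m (k - j) * (mu * b))) {..k}"
    proof (rule msum_cong)
      fix j assume "j \<in> {..k}"
      then have "Suc k - j = Suc (k - j)" by auto
      then show "TM j * (SL (Suc k - j) * b) = TM j * (SL (k - j) * b1) + TM j * (e1' * v' ^\<^sub>m (k - j) * (mu * b))"
        by (simp add: dR dL mA vb[symmetric])
    qed
    also have "\<dots> = MB + MA" unfolding MA_def MB_def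
      by (rule msum_add) (auto intro!: carrier_matI)
    finally show ?thesis by simp
  qed
  have rhs2: "TM (Suc k) * (SL 0 * b) = a2 * (D2' * (D1 * b)) + SM k * (e2' * (D1 * b))"
    by (simp add: dR mA a2_def)
  have rhs3: "SM (Suc k) * (l * b) = SM k * (v' * (l * b)) + a2 * (mu' * (l * b))"
    by (simp add: dR mA a2_def)
  have fin: "\<And>X1 X2 X3 X4 X5 X6 X8 X9 :: 'a mat.
     X1 \<in> carrier_mat r'' r \<Longrightarrow> X2 \<in> carrier_mat r'' r \<Longrightarrow> X3 \<in> carrier_mat r'' r \<Longrightarrow>
     X4 \<in> carrier_mat r'' r \<Longrightarrow> X5 \<in> carrier_mat r'' r \<Longrightarrow> X6 \<in> carrier_mat r'' r \<Longrightarrow>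
     X8 \<in> carrier_mat r'' r \<Longrightarrow> X9 \<in> carrier_mat r'' r \<Longrightarrow>
     X8 + X9 = X2 + X5 \<Longrightarrow>
     X1 + X2 + X3 + (X4 + X5) + X6 = X6 + X9 + (X1 + X4) + (X8 + X3)"
  proof -
    fix X1 X2 X3 X4 X5 X6 X8 X9 :: "'a mat"
    assume c: "X1 \<in> carrier_mat r'' r" "X2 \<in> carrier_mat r'' r" "X3 \<in> carrier_mat r'' r"
     "X4 \<in> carrier_mat r'' r" "X5 \<in> carrier_mat r'' r" "X6 \<in> carrier_mat r'' r"
     "X8 \<in> carrier_mat r'' r" "X9 \<in> carrier_mat r'' r"
     and h: "X8 + X9 = X2 + X5"
    show "X1 + X2 + X3 + (X4 + X5) + X6 = X6 + X9 + (X1 + X4) + (X8 + X3)"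
    proof (rule mat_eq_entries[of _ r'' r])
      fix i j assume ij: "i < r''" "j < r"
      have "X8 $$ (i, j) + X9 $$ (i, j) = X2 $$ (i, j) + X5 $$ (i, j)"
        using mat_eqE[OF h, of i j] c ij by simp
      then show "(X1 + X2 + X3 + (X4 + X5) + X6) $$ (i, j) = (X6 + X9 + (X1 + X4) + (X8 + X3)) $$ (i, j)"
        using c ij by simp (metis add.commute)
    qed (use c in auto)
  qed
  show ?case
    unfolding b_def[symmetric] st1 IH st2 rhs1 rhs2 rhs3
    by (rule fin[OF _ _ _ _ _ _ _ _ st3]) (auto intro!: carrier_matI)
qed

lemma lemMain: "TN k = msum r'' r (\<lambda>j. TM j * TL (k - j)) {..k}"
proof (cases k)
  case 0
  have c: "TM 0 * TL (0 - 0) \<in> carrier_mat r'' r" by (rule carrier_matI) auto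
  have "{..0::nat} = {0}" by auto
  then show ?thesis using 0 msum_sing[of "\<lambda>j. TM j * TL (0 - j)" 0, OF c] by simp
next
  case (Suc k)
  define a2 where "a2 = e1'' * v'' ^\<^sub>m k"
  have a2d[simp]: "dim_row a2 = r''" "dim_col a2 = n''" by (auto simp: a2_def)
  define MA where "MA = msum r'' r (\<lambda>j. TM j * (e1' * v' ^\<^sub>m (k - j) * D2)) {..k}"
  define MB where "MB = msum r'' r (\<lambda>j. TM j * (SL (k - j) * e2)) {..k}"
  have MAd[simp]: "dim_row MA = r''" "dim_col MA = r" "dim_row MB = r''" "dim_col MB = r"
    by (auto simp: MA_def MB_def)
  have l1: "TN (Suc k) = a2 * (l' * D2) + a2 * (D2' * rho) + SN k * e2"
    by (simp add: dL mA a2_def)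
  have l2: "SN k * e2 = MB + SM k * (l * e2)"
    using lemP[of k 0] by (simp add: MB_def)
  have l3: "a2 * (l' * D2) = MA + SM k * (d' * D2)"
  proof -
    have "a2 * (l' * D2) = (a2 * l') * D2" by (simp add: mA)
    also have "\<dots> = (msum r'' n' (\<lambda>j. TM j * (e1' * v' ^\<^sub>m (k - j))) {..k} + SM k * d') * D2"
      by (simp add: a2_def M.lemA)
    also have "\<dots> = msum r'' n' (\<lambda>j. TM j * (e1' * v' ^\<^sub>m (k - j))) {..k} * D2 + SM k * (d' * D2)"
      by (simp add: dR mA)
    also have "msum r'' n' (\<lambda>j. TM j * (e1' * v' ^\<^sub>m (k - j))) {..k} * D2
      = msum r'' r (\<lambda>j. TM j * (e1' * v' ^\<^sub>m (k - j)) * D2) {..k}"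
      by (rule msum_mult_right) (auto intro!: carrier_matI)
    also have "\<dots> = MA" unfolding MA_def by (rule msum_cong) (simp add: mA)
    finally show ?thesis .
  qed
  have l4: "SM k * (l * e2) + SM k * (d' * D2) = SM k * (e2' * rho)"
  proof -
    have "SM k * (l * e2 + d' * D2) = SM k * (e2' * rho)" using L.E3 by simp
    then show ?thesis by (simp add: dL)
  qed
  have r1: "msum r'' r (\<lambda>j. TM j * TL (Suc k - j)) {..Suc k} = a2 * (D2' * rho) + SM k * (e2' * rho) + (MA + MB)"
  proof -
    have c: "TM (Suc k) * TL (Suc k - Suc k) \<in> carrier_mat r'' r" by (rule carrier_matI) auto
    have "msum r'' r (\<lambda>j. TM j * TL (Suc k - j)) {..Suc k}
      = TM (Suc k) * TL (Suc k - Suc k) + msum r'' r (\<lambda>j. TM j * TL (Suc k - j)) {..k}"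
      using msum_Suc[of "\<lambda>j. TM j * TL (Suc k - j)", OF c] by simp
    also have "msum r'' r (\<lambda>j. TM j * TL (Suc k - j)) {..k}
      = msum r'' r (\<lambda>j. TM j * (e1' * v' ^\<^sub>m (k - j) * D2) + TM j * (SL (k - j) * e2)) {..k}"
    proof (rule msum_cong)
      fix j assume "j \<in> {..k}"
      then have "Suc k - j = Suc (k - j)" by auto
      then show "TM j * TL (Suc k - j) = TM j * (e1' * v' ^\<^sub>m (k - j) * D2) + TM j * (SL (k - j) * e2)"
        by (simp add: dL)
    qed
    also have "\<dots> = MA + MB" unfolding MA_def MB_def
      by (rule msum_add) (auto intro!: carrier_matI)
    also have "TM (Suc k) * TL (Suc k - Suc k) = a2 * (D2' * rho) + SM k * (e2' * rho)"
      by (simp add: dR mA a2_def)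
    finally show ?thesis .
  qed
  have fin: "\<And>X1 X2 X3 X4 X5 X6 :: 'a mat.
     X1 \<in> carrier_mat r'' r \<Longrightarrow> X2 \<in> carrier_mat r'' r \<Longrightarrow> X3 \<in> carrier_mat r'' r \<Longrightarrow>
     X4 \<in> carrier_mat r'' r \<Longrightarrow> X5 \<in> carrier_mat r'' r \<Longrightarrow> X6 \<in> carrier_mat r'' r \<Longrightarrow>
     X5 + X2 = X6 \<Longrightarrow>
     X1 + X2 + X3 + (X4 + X5) = X3 + X6 + (X1 + X4)"
  proof -
    fix X1 X2 X3 X4 X5 X6 :: "'a mat"
    assume c: "X1 \<in> carrier_mat r'' r" "X2 \<in> carrier_mat r'' r" "X3 \<in> carrier_mat r'' r"
     "X4 \<in> carrier_mat r'' r" "X5 \<in> carrier_mat r'' r" "X6 \<in> carrier_mat r'' r"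
     and h: "X5 + X2 = X6"
    show "X1 + X2 + X3 + (X4 + X5) = X3 + X6 + (X1 + X4)"
    proof (rule mat_eq_entries[of _ r'' r])
      fix i j assume ij: "i < r''" "j < r"
      have "X5 $$ (i, j) + X2 $$ (i, j) = X6 $$ (i, j)"
        using mat_eqE[OF h, of i j] c ij by simp
      then show "(X1 + X2 + X3 + (X4 + X5)) $$ (i, j) = (X3 + X6 + (X1 + X4)) $$ (i, j)"
        using c ij by (simp add: algebra_simps)
    qed (use c in auto)
  qed
  show ?thesis unfolding Suc l1 l2 l3 r1
    by (rule fin[OF _ _ _ _ _ _ l4]) (auto intro!: carrier_matI)
qed
end


lemma len_totdeg[simp]: "length (totdeg X) = 2 * nC X + nR X"
  by (simp add: totdeg_def nC_def nR_def)

lemma mblk_dims[simp]: "dim_row (mblk Y X M a b) = bsize Y a" "dim_col (mblk Y X M a b) = bsize X b"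
  by (simp_all add: mblk_def blk_def)

lemma mblk_index: "i < bsize Y a \<Longrightarrow> j < bsize X b \<Longrightarrow> mblk Y X M a b $$ (i, j) = M $$ (boff Y a + i, boff X b + j)"
  by (simp add: mblk_def blk_def)

lemma boff_bsize: "a < 3 \<Longrightarrow> boff X a + bsize X a \<le> 2 * nC X + nR X"
  by (auto simp: boff_def bsize_def)

lemma sum_split_nat: "(\<Sum>l<(p::nat) + q. f l) = (\<Sum>l<p. f l) + (\<Sum>l<q. f (p + l))"
  by (induct q) (auto simp: add_ac)

lemma mblk_mult:
  assumes A: "A \<in> carrier_mat (2 * nC Z + nR Z) (2 * nC Y + nR Y)"
    and B: "B \<in> carrier_mat (2 * nC Y + nR Y) (2 * nC X + nR X)" and ab: "a < 3" "b < 3"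
  shows "mblk Z X (A * B) a b = mblk Z Y A a 0 * mblk Y X B 0 b + mblk Z Y A a 1 * mblk Y X B 1 b
     + mblk Z Y A a 2 * mblk Y X B 2 b"
proof (rule mat_eq_entries[of _ "bsize Z a" "bsize X b"])
  fix i j assume i: "i < bsize Z a" and j: "j < bsize X b"
  have I: "boff Z a + i < 2 * nC Z + nR Z" using boff_bsize[OF ab(1), of Z] i by linarith
  have J: "boff X b + j < 2 * nC X + nR X" using boff_bsize[OF ab(2), of X] j by linarith
  let ?f = "\<lambda>l. A $$ (boff Z a + i, l) * B $$ (l, boff X b + j)"
  have "mblk Z X (A * B) a b $$ (i, j) = (\<Sum>l < 2 * nC Y + nR Y. ?f l)"
    using i j I J A B by (simp add: mblk_index scalar_prod_def atLeast0LessThan)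
  also have "\<dots> = (\<Sum>l < nC Y. ?f l) + (\<Sum>l < nC Y. ?f (nC Y + l)) + (\<Sum>l < nR Y. ?f (2 * nC Y + l))"
    using sum_split_nat[of ?f "2 * nC Y" "nR Y"] sum_split_nat[of ?f "nC Y" "nC Y"] by (simp add: mult_2)
  also have "\<dots> = (mblk Z Y A a 0 * mblk Y X B 0 b + mblk Z Y A a 1 * mblk Y X B 1 b
     + mblk Z Y A a 2 * mblk Y X B 2 b) $$ (i, j)"
    using i j by (simp add: mblk_index scalar_prod_def atLeast0LessThan bsize_def boff_def mult_2)
  finally show "mblk Z X (A * B) a b $$ (i, j) = (mblk Z Y A a 0 * mblk Y X B 0 b + mblk Z Y A a 1 * mblk Y X B 1 b
     + mblk Z Y A a 2 * mblk Y X B 2 b) $$ (i, j)" .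
qed (auto simp: bsize_def)

lemma mblk_zero: "a < 3 \<Longrightarrow> b < 3 \<Longrightarrow> mblk Y X (0\<^sub>m (2 * nC Y + nR Y) (2 * nC X + nR X)) a b = 0\<^sub>m (bsize Y a) (bsize X b)"
proof (rule mat_eq_entries[of _ "bsize Y a" "bsize X b"])
  fix i j assume ab: "a < 3" "b < 3" and i: "i < bsize Y a" and j: "j < bsize X b"
  have I: "boff Y a + i < 2 * nC Y + nR Y" using boff_bsize[OF ab(1), of Y] i by linarith
  have J: "boff X b + j < 2 * nC X + nR X" using boff_bsize[OF ab(2), of X] j by linarith
  show "mblk Y X (0\<^sub>m (2 * nC Y + nR Y) (2 * nC X + nR X)) a b $$ (i, j) = 0\<^sub>m (bsize Y a) (bsize X b) $$ (i, j)"
    using I J i j by (simp add: mblk_index)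
qed auto

definition bd :: "'a scx \<Rightarrow> nat \<Rightarrow> int list" where
  "bd X b = (if b = 0 then cdeg X else if b = 1 then map (\<lambda>d. d + 1) (cdeg X) else rdeg X)"

lemma bd_len: "b < 3 \<Longrightarrow> length (bd X b) = bsize X b"
  by (simp add: bd_def bsize_def nC_def nR_def)

lemma totdeg_nth: "b < 3 \<Longrightarrow> j < bsize X b \<Longrightarrow> totdeg X ! (boff X b + j) = bd X b ! j"
  by (auto simp: totdeg_def bd_def boff_def bsize_def nC_def nR_def nth_append mult_2)

lemma mblk_graded:
  assumes g: "graded_map k (totdeg X) (totdeg Y) M" and ab: "a < 3" "b < 3"
  shows "graded_map k (bd X b) (bd Y a) (mblk Y X M a b)"
  unfolding graded_map_def
proof (intro conjI allI impI)
  show "mblk Y X M a b \<in> carrier_mat (length (bd Y a)) (length (bd X b))"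
    using ab by (rule_tac carrier_matI) (simp_all add: bd_len)
next
  fix i j assume i: "i < length (bd Y a)" and j: "j < length (bd X b)" and nz: "mblk Y X M a b $$ (i, j) \<noteq> 0"
  have I: "boff Y a + i < length (totdeg Y)" using boff_bsize[OF ab(1), of Y] i by (simp add: bd_len ab)
  have J: "boff X b + j < length (totdeg X)" using boff_bsize[OF ab(2), of X] j by (simp add: bd_len ab)
  have "M $$ (boff Y a + i, boff X b + j) \<noteq> 0" using nz i j by (simp add: mblk_index bd_len ab)
  then have "totdeg Y ! (boff Y a + i) = totdeg X ! (boff X b + j) + k"
    using g I J unfolding graded_map_def by blast
  then show "bd Y a ! i = bd X b ! j + k" using i j ab by (simp add: totdeg_nth bd_len ab)
qed

lemma graded_mult:
  assumes M: "graded_map k1 ds dt M" and N: "graded_map k2 dt du N"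
  shows "graded_map (k1 + k2) ds du (N * M)"
  unfolding graded_map_def
proof (intro conjI allI impI)
  show "N * M \<in> carrier_mat (length du) (length ds)" using M N unfolding graded_map_def by auto
next
  fix i j assume i: "i < length du" and j: "j < length ds" and nz: "(N * M) $$ (i, j) \<noteq> 0"
  have Mc: "M \<in> carrier_mat (length dt) (length ds)" and Nc: "N \<in> carrier_mat (length du) (length dt)"
    using M N unfolding graded_map_def by auto
  have "(\<Sum>l<length dt. N $$ (i, l) * M $$ (l, j)) \<noteq> 0"
    using nz i j Mc Nc by (simp add: scalar_prod_def atLeast0LessThan)
  then obtain l where l: "l < length dt" "N $$ (i, l) * M $$ (l, j) \<noteq> 0"
    by (meson lessThan_iff sum.neutral)
  then have "N $$ (i, l) \<noteq> 0" "M $$ (l, j) \<noteq> 0" by auto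
  then have "du ! i = dt ! l + k2" "dt ! l = ds ! j + k1"
    using M N i j l(1) unfolding graded_map_def by blast+
  then show "du ! i = ds ! j + (k1 + k2)" by simp
qed

lemma graded_shift:
  assumes "graded_map k ds (map (\<lambda>d. d + 1) dt) M"
  shows "graded_map (k - 1) ds dt M"
  unfolding graded_map_def
proof (intro conjI allI impI)
  show "M \<in> carrier_mat (length dt) (length ds)" using assms unfolding graded_map_def by auto
next
  fix i j assume "i < length dt" "j < length ds" "M $$ (i, j) \<noteq> 0"
  then have "map (\<lambda>d. d + 1) dt ! i = ds ! j + k" using assms unfolding graded_map_def by auto
  then show "dt ! i = ds ! j + (k - 1)" using \<open>i < length dt\<close> by simp
qed

lemma graded_one: "graded_map 0 ds ds (1\<^sub>m (length ds) :: 'a :: {zero_neq_one} mat)"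
  unfolding graded_map_def by auto

lemma graded_pow:
  assumes "graded_map k ds ds (A :: 'a :: semiring_1 mat)"
  shows "graded_map (k * int i) ds ds (A ^\<^sub>m i)"
proof (induct i)
  case 0
  have "dim_row A = length ds" using assms unfolding graded_map_def by auto
  then show ?case using graded_one[of ds] by simp
next
  case (Suc i)
  have "graded_map (k + k * int i) ds ds (A ^\<^sub>m i * A)" by (rule graded_mult[OF assms Suc])
  then show ?case by (simp add: algebra_simps)
qed

lemma graded_odd_zero:
  assumes g: "graded_map k ds dt M" and "odd k" and "\<forall>e\<in>set ds. even e" and "\<forall>e\<in>set dt. even e"
  shows "M = 0\<^sub>m (length dt) (length ds)"
proof (rule mat_eq_entries[of _ "length dt" "length ds"])
  fix i j assume i: "i < length dt" and j: "j < length ds"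
  show "M $$ (i, j) = 0\<^sub>m (length dt) (length ds) $$ (i, j)"
  proof (rule ccontr)
    assume "M $$ (i, j) \<noteq> 0\<^sub>m (length dt) (length ds) $$ (i, j)"
    then have "M $$ (i, j) \<noteq> 0" using i j by simp
    then have "dt ! i = ds ! j + k" using g i j unfolding graded_map_def by blast
    moreover have "even (dt ! i)" "even (ds ! j)" using assms i j by auto
    ultimately show False using assms(2) by auto
  qed
qed (use g in \<open>auto simp: graded_map_def\<close>)


lemma bd2[simp]: "bd X 2 = rdeg X" "bd X 0 = cdeg X" "bd X 1 = map (\<lambda>d. d + 1) (cdeg X)" "bd X (Suc 0) = map (\<lambda>d. d + 1) (cdeg X)"
  by (simp_all add: bd_def)

lemma Sc_carrier: "S_complex X \<Longrightarrow> dif X \<in> carrier_mat (2 * nC X + nR X) (2 * nC X + nR X)"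
  unfolding S_complex_def graded_map_def by auto

lemma rp_r0: "r_perfect X \<Longrightarrow> mblk X X (dif X) 2 2 = 0\<^sub>m (nR X) (nR X)"
proof -
  assume rp: "r_perfect X"
  then have g: "graded_map (-1) (totdeg X) (totdeg X) (dif X)" and ev: "\<forall>e\<in>set (rdeg X). even e"
    unfolding r_perfect_def S_complex_def by auto
  have "graded_map (-1) (rdeg X) (rdeg X) (mblk X X (dif X) 2 2)" using mblk_graded[OF g, of 2 2] by simp
  from graded_odd_zero[OF this _ ev ev] show ?thesis by (simp add: nR_def)
qed

lemma sdims[simp]: "bsize X 0 = nC X" "bsize X 1 = nC X" "bsize X 2 = nR X"
  "boff X 0 = 0" "boff X 1 = nC X" "boff X 2 = 2 * nC X" "bsize X (Suc 0) = nC X" "boff X (Suc 0) = nC X"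
  by (simp_all add: bsize_def boff_def)

lemma blk_names: "mblk X X (dif X) 0 0 = d_of X" "mblk X X (dif X) 1 0 = v_of X"
  "mblk X X (dif X) 1 2 = delta2_of X" "mblk X X (dif X) 2 0 = delta1_of X"
  "mblk X X (dif X) (Suc 0) 0 = v_of X" "mblk X X (dif X) (Suc 0) 2 = delta2_of X"
  by (simp_all add: d_of_def v_of_def delta1_of_def delta2_of_def)

lemma blk_names_m: "mblk Y X L 1 0 = mu_of X Y L" "mblk Y X L (Suc 0) 0 = mu_of X Y L" "mblk Y X L (Suc 0) 2 = Delta2_of X Y L"
  "mblk Y X L 1 0 = mu_of X Y L" "mblk Y X L 1 2 = Delta2_of X Y L" "mblk Y X L 2 0 = Delta1_of X Y L"
  "mblk Y X L 2 2 = rho_of X Y L"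
  by (simp_all add: d_of_def v_of_def delta1_of_def delta2_of_def mu_of_def Delta2_of_def Delta1_of_def rho_of_def)

lemma name_dims[simp]: "dim_row (d_of X) = nC X" "dim_col (d_of X) = nC X"
  "dim_row (v_of X) = nC X" "dim_col (v_of X) = nC X"
  "dim_row (delta1_of X) = nR X" "dim_col (delta1_of X) = nC X"
  "dim_row (delta2_of X) = nC X" "dim_col (delta2_of X) = nR X"
  "dim_row (mu_of X Y L) = nC Y" "dim_col (mu_of X Y L) = nC X"
  "dim_row (Delta1_of X Y L) = nR Y" "dim_col (Delta1_of X Y L) = nC X"
  "dim_row (Delta2_of X Y L) = nC Y" "dim_col (Delta2_of X Y L) = nR X"
  "dim_row (rho_of X Y L) = nR Y" "dim_col (rho_of X Y L) = nR X"
  by (simp_all add: d_of_def v_of_def delta1_of_def delta2_of_def mu_of_def Delta2_of_def Delta1_of_def rho_of_def)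

lemma rp_cxa:
  assumes rp: "r_perfect X"
  shows "cxa (nC X) (nR X) (d_of X) (v_of X) (delta1_of X) (delta2_of X)"
proof -
  have Sc: "S_complex X" using rp by (simp add: r_perfect_def)
  have Dc: "dif X \<in> carrier_mat (2 * nC X + nR X) (2 * nC X + nR X)" by (rule Sc_carrier[OF Sc])
  have sq: "dif X * dif X = 0\<^sub>m (2 * nC X + nR X) (2 * nC X + nR X)" using Sc by (simp add: S_complex_def)
  have z01: "mblk X X (dif X) 0 1 = 0\<^sub>m (nC X) (nC X)" and z02: "mblk X X (dif X) 0 2 = 0\<^sub>m (nC X) (nR X)"
    and z21: "mblk X X (dif X) 2 1 = 0\<^sub>m (nR X) (nC X)" and m11: "mblk X X (dif X) 1 1 = - d_of X"
    using Sc by (simp_all add: S_complex_def)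
  have z22: "mblk X X (dif X) 2 2 = 0\<^sub>m (nR X) (nR X)" by (rule rp_r0[OF rp])
  have blk: "\<And>a b. a < 3 \<Longrightarrow> b < 3 \<Longrightarrow> mblk X X (dif X) a 0 * mblk X X (dif X) 0 b + mblk X X (dif X) a 1 * mblk X X (dif X) 1 b
     + mblk X X (dif X) a 2 * mblk X X (dif X) 2 b = 0\<^sub>m (bsize X a) (bsize X b)"
    using mblk_mult[OF Dc Dc] mblk_zero[of _ _ X X] sq by metis
  have h10: "v_of X * d_of X + - d_of X * v_of X + delta2_of X * delta1_of X = 0\<^sub>m (nC X) (nC X)"
    using blk[of 1 0] m11 by (simp add: blk_names)
  have h20: "delta1_of X * d_of X = 0\<^sub>m (nR X) (nC X)"
    using blk[of 2 0] z21 z22 by (simp add: blk_names addz)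
  have h12: "- d_of X * delta2_of X = 0\<^sub>m (nC X) (nR X)"
    using blk[of 1 2] z02 z22 m11 by (simp add: blk_names addz zadd)
  have odd: "\<And>i. delta1_of X * v_of X ^\<^sub>m i * delta2_of X = 0\<^sub>m (nR X) (nR X)"
  proof -
    fix i
    have g: "graded_map (-1) (totdeg X) (totdeg X) (dif X)" and ev: "\<forall>e\<in>set (rdeg X). even e"
      using rp unfolding r_perfect_def S_complex_def by auto
    have "graded_map (-1) (cdeg X) (map (\<lambda>d. d + 1) (cdeg X)) (v_of X)"
      using mblk_graded[OF g, of 1 0] by (simp add: v_of_def)
    from graded_shift[OF this] have gv: "graded_map (-2) (cdeg X) (cdeg X) (v_of X)" by simp
    have g1: "graded_map (-1) (cdeg X) (rdeg X) (delta1_of X)"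
      using mblk_graded[OF g, of 2 0] by (simp add: delta1_of_def)
    have "graded_map (-1) (rdeg X) (map (\<lambda>d. d + 1) (cdeg X)) (delta2_of X)"
      using mblk_graded[OF g, of 1 2] by (simp add: delta2_of_def)
    from graded_shift[OF this] have g2: "graded_map (-2) (rdeg X) (cdeg X) (delta2_of X)" by simp
    have "graded_map (-2 + (-2 * int i + -1)) (rdeg X) (rdeg X) (delta1_of X * v_of X ^\<^sub>m i * delta2_of X)"
      by (rule graded_mult[OF g2 graded_mult[OF graded_pow[OF gv] g1]])
    from graded_odd_zero[OF this _ ev ev] show "delta1_of X * v_of X ^\<^sub>m i * delta2_of X = 0\<^sub>m (nR X) (nR X)"
      by (simp add: nR_def)
  qed
  show ?thesis
  proof (unfold_locales)
    show "d_of X \<in> carrier_mat (nC X) (nC X)" "v_of X \<in> carrier_mat (nC X) (nC X)"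
      "delta1_of X \<in> carrier_mat (nR X) (nC X)" "delta2_of X \<in> carrier_mat (nC X) (nR X)"
      by (auto intro!: carrier_matI)
    show "delta1_of X * d_of X = 0\<^sub>m (nR X) (nC X)" by (rule h20)
    show "d_of X * delta2_of X = 0\<^sub>m (nC X) (nR X)"
    proof (rule mat_eq_entries[of _ "nC X" "nR X"])
      fix i j assume ij: "i < nC X" "j < nR X"
      have "(- d_of X * delta2_of X) $$ (i, j) = 0" using mat_eqE[OF h12, of i j] ij by simp
      then show "(d_of X * delta2_of X) $$ (i, j) = 0\<^sub>m (nC X) (nR X) $$ (i, j)" using ij by simp
    qed auto
    show "d_of X * v_of X = v_of X * d_of X + delta2_of X * delta1_of X"
    proof (rule mat_eq_entries[of _ "nC X" "nC X"])
      fix i j assume ij: "i < nC X" "j < nC X"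
      have "(v_of X * d_of X + - d_of X * v_of X + delta2_of X * delta1_of X) $$ (i, j) = 0"
        using mat_eqE[OF h10, of i j] ij by simp
      then show "(d_of X * v_of X) $$ (i, j) = (v_of X * d_of X + delta2_of X * delta1_of X) $$ (i, j)"
        using ij by (simp add: algebra_simps)
    qed auto
    show "\<And>i. delta1_of X * v_of X ^\<^sub>m i * delta2_of X = 0\<^sub>m (nR X) (nR X)" by (rule odd)
  qed
qed


lemma Sc_blocks:
  assumes "S_complex X"
  shows "mblk X X (dif X) 0 1 = 0\<^sub>m (nC X) (nC X)" "mblk X X (dif X) 0 2 = 0\<^sub>m (nC X) (nR X)"
    "mblk X X (dif X) 2 1 = 0\<^sub>m (nR X) (nC X)" "mblk X X (dif X) 1 1 = - d_of X"
    "mblk X X (dif X) 2 (Suc 0) = 0\<^sub>m (nR X) (nC X)" "mblk X X (dif X) (Suc 0) (Suc 0) = - d_of X"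
    "mblk X X (dif X) 0 (Suc 0) = 0\<^sub>m (nC X) (nC X)"
  using assms by (simp_all add: S_complex_def)

lemma sm_mora:
  assumes sm: "S_morphism k X Y L" and rpX: "r_perfect X" and rpY: "r_perfect Y"
  shows "mora (nC X) (nR X) (d_of X) (v_of X) (delta1_of X) (delta2_of X) (nC Y) (nR Y) (d_of Y) (v_of Y)
     (delta1_of Y) (delta2_of Y) (mblk Y X L 0 0) (mu_of X Y L) (Delta1_of X Y L) (Delta2_of X Y L) (rho_of X Y L)"
proof -
  have ScX: "S_complex X" and ScY: "S_complex Y" using sm by (simp_all add: S_morphism_def)
  have DX: "dif X \<in> carrier_mat (2 * nC X + nR X) (2 * nC X + nR X)" by (rule Sc_carrier[OF ScX])
  have DY: "dif Y \<in> carrier_mat (2 * nC Y + nR Y) (2 * nC Y + nR Y)" by (rule Sc_carrier[OF ScY])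
  have Lc: "L \<in> carrier_mat (2 * nC Y + nR Y) (2 * nC X + nR X)"
    using sm by (simp add: S_morphism_def graded_map_def)
  have comm: "dif Y * L = L * dif X" using sm by (simp add: S_morphism_def)
  have Lz: "mblk Y X L 0 1 = 0\<^sub>m (nC Y) (nC X)" "mblk Y X L 0 2 = 0\<^sub>m (nC Y) (nR X)"
     "mblk Y X L 2 1 = 0\<^sub>m (nR Y) (nC X)" "mblk Y X L 1 1 = mblk Y X L 0 0"
    using sm by (simp_all add: S_morphism_def)
  then have Lz': "mblk Y X L 2 (Suc 0) = 0\<^sub>m (nR Y) (nC X)" "mblk Y X L (Suc 0) (Suc 0) = mblk Y X L 0 0"
     "mblk Y X L 0 (Suc 0) = 0\<^sub>m (nC Y) (nC X)" by simp_all
  have eqblk: "\<And>a b. a < 3 \<Longrightarrow> b < 3 \<Longrightarrow>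
     mblk Y Y (dif Y) a 0 * mblk Y X L 0 b + mblk Y Y (dif Y) a 1 * mblk Y X L 1 b + mblk Y Y (dif Y) a 2 * mblk Y X L 2 b
   = mblk Y X L a 0 * mblk X X (dif X) 0 b + mblk Y X L a 1 * mblk X X (dif X) 1 b + mblk Y X L a 2 * mblk X X (dif X) 2 b"
    using mblk_mult[OF DY Lc] mblk_mult[OF Lc DX] comm by metis
  have rX: "mblk X X (dif X) 2 2 = 0\<^sub>m (nR X) (nR X)" by (rule rp_r0[OF rpX])
  have rY: "mblk Y Y (dif Y) 2 2 = 0\<^sub>m (nR Y) (nR Y)" by (rule rp_r0[OF rpY])
  have mdim: "dim_row (mblk Y X L a b) = bsize Y a" "dim_col (mblk Y X L a b) = bsize X b" for a b by simp_all
  have E4: "delta1_of Y * mblk Y X L 0 0 = mblk Y X L 2 0 * d_of X + mblk Y X L 2 2 * delta1_of X"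
    using eqblk[of 2 0] Sc_blocks[OF ScX] Sc_blocks[OF ScY] Lz Lz' rX rY by (simp add: blk_names addz)
  have h10: "v_of Y * mblk Y X L 0 0 + - d_of Y * mblk Y X L 1 0 + delta2_of Y * mblk Y X L 2 0
     = mblk Y X L 1 0 * d_of X + mblk Y X L 0 0 * v_of X + mblk Y X L 1 2 * delta1_of X"
    using eqblk[of 1 0] Sc_blocks[OF ScX] Sc_blocks[OF ScY] Lz Lz' rX rY by (simp add: blk_names)
  have h12: "- d_of Y * mblk Y X L 1 2 + delta2_of Y * mblk Y X L 2 2 = mblk Y X L 0 0 * delta2_of X"
    using eqblk[of 1 2] Sc_blocks[OF ScX] Sc_blocks[OF ScY] Lz Lz' rX rY by (simp add: blk_names addz zadd)
  show ?thesis
    unfolding mora_def mora_axioms_def mu_of_def Delta1_of_def Delta2_of_def rho_of_def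
  proof (intro conjI)
    show "cxa (nC X) (nR X) (d_of X) (v_of X) (delta1_of X) (delta2_of X)" by (rule rp_cxa[OF rpX])
    show "cxa (nC Y) (nR Y) (d_of Y) (v_of Y) (delta1_of Y) (delta2_of Y)" by (rule rp_cxa[OF rpY])
    show "mblk Y X L 0 0 \<in> carrier_mat (nC Y) (nC X)" "mblk Y X L 1 0 \<in> carrier_mat (nC Y) (nC X)"
      "mblk Y X L 2 0 \<in> carrier_mat (nR Y) (nC X)" "mblk Y X L 1 2 \<in> carrier_mat (nC Y) (nR X)"
      "mblk Y X L 2 2 \<in> carrier_mat (nR Y) (nR X)" by (auto intro!: carrier_matI)
    show "delta1_of Y * mblk Y X L 0 0 = mblk Y X L 2 0 * d_of X + mblk Y X L 2 2 * delta1_of X" by (rule E4)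
    show "v_of Y * mblk Y X L 0 0 + delta2_of Y * mblk Y X L 2 0 =
      mblk Y X L 1 0 * d_of X + mblk Y X L 0 0 * v_of X + mblk Y X L 1 2 * delta1_of X + d_of Y * mblk Y X L 1 0"
    proof (rule mat_eq_entries[of _ "nC Y" "nC X"])
      fix i j assume ij: "i < nC Y" "j < nC X"
      have "(v_of Y * mblk Y X L 0 0 + - d_of Y * mblk Y X L 1 0 + delta2_of Y * mblk Y X L 2 0) $$ (i, j)
        = (mblk Y X L 1 0 * d_of X + mblk Y X L 0 0 * v_of X + mblk Y X L 1 2 * delta1_of X) $$ (i, j)"
        using h10 by simp
      then show "(v_of Y * mblk Y X L 0 0 + delta2_of Y * mblk Y X L 2 0) $$ (i, j) =
        (mblk Y X L 1 0 * d_of X + mblk Y X L 0 0 * v_of X + mblk Y X L 1 2 * delta1_of X + d_of Y * mblk Y X L 1 0) $$ (i, j)"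
        using ij by (simp add: algebra_simps)
    qed simp_all
    show "mblk Y X L 0 0 * delta2_of X + d_of Y * mblk Y X L 1 2 = delta2_of Y * mblk Y X L 2 2"
    proof (rule mat_eq_entries[of _ "nC Y" "nR X"])
      fix i j assume ij: "i < nC Y" "j < nR X"
      have "(- d_of Y * mblk Y X L 1 2 + delta2_of Y * mblk Y X L 2 2) $$ (i, j) = (mblk Y X L 0 0 * delta2_of X) $$ (i, j)"
        using h12 by simp
      then show "(mblk Y X L 0 0 * delta2_of X + d_of Y * mblk Y X L 1 2) $$ (i, j) = (delta2_of Y * mblk Y X L 2 2) $$ (i, j)"
        using ij by (simp add: algebra_simps)
    qed simp_all
  qed
qed


lemma comp_blocks:
  assumes sm1: "S_morphism k X Y L" and sm2: "S_morphism k' Y Z L'"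
  shows "mblk Z X (L' * L) 0 0 = mblk Z Y L' 0 0 * mblk Y X L 0 0"
    "mblk Z X (L' * L) 1 1 = mblk Z X (L' * L) 0 0"
    "mblk Z X (L' * L) 0 1 = 0\<^sub>m (nC Z) (nC X)"
    "mblk Z X (L' * L) 0 2 = 0\<^sub>m (nC Z) (nR X)"
    "mblk Z X (L' * L) 2 1 = 0\<^sub>m (nR Z) (nC X)"
    "mu_of X Z (L' * L) = mu_of Y Z L' * mblk Y X L 0 0 + mblk Z Y L' 0 0 * mu_of X Y L + Delta2_of Y Z L' * Delta1_of X Y L"
    "Delta1_of X Z (L' * L) = Delta1_of Y Z L' * mblk Y X L 0 0 + rho_of Y Z L' * Delta1_of X Y L"
    "Delta2_of X Z (L' * L) = mblk Z Y L' 0 0 * Delta2_of X Y L + Delta2_of Y Z L' * rho_of X Y L"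
    "rho_of X Z (L' * L) = rho_of Y Z L' * rho_of X Y L"
proof -
  have Lc: "L \<in> carrier_mat (2 * nC Y + nR Y) (2 * nC X + nR X)"
    using sm1 by (simp add: S_morphism_def graded_map_def)
  have L'c: "L' \<in> carrier_mat (2 * nC Z + nR Z) (2 * nC Y + nR Y)"
    using sm2 by (simp add: S_morphism_def graded_map_def)
  have Lz: "mblk Y X L 0 1 = 0\<^sub>m (nC Y) (nC X)" "mblk Y X L 0 2 = 0\<^sub>m (nC Y) (nR X)"
     "mblk Y X L 2 1 = 0\<^sub>m (nR Y) (nC X)" "mblk Y X L 1 1 = mblk Y X L 0 0"
    using sm1 by (simp_all add: S_morphism_def)
  then have Lz': "mblk Y X L 2 (Suc 0) = 0\<^sub>m (nR Y) (nC X)" "mblk Y X L (Suc 0) (Suc 0) = mblk Y X L 0 0"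
     "mblk Y X L 0 (Suc 0) = 0\<^sub>m (nC Y) (nC X)" by simp_all
  have L'z: "mblk Z Y L' 0 1 = 0\<^sub>m (nC Z) (nC Y)" "mblk Z Y L' 0 2 = 0\<^sub>m (nC Z) (nR Y)"
     "mblk Z Y L' 2 1 = 0\<^sub>m (nR Z) (nC Y)" "mblk Z Y L' 1 1 = mblk Z Y L' 0 0"
    using sm2 by (simp_all add: S_morphism_def)
  then have L'z': "mblk Z Y L' 2 (Suc 0) = 0\<^sub>m (nR Z) (nC Y)" "mblk Z Y L' (Suc 0) (Suc 0) = mblk Z Y L' 0 0"
     "mblk Z Y L' 0 (Suc 0) = 0\<^sub>m (nC Z) (nC Y)" by simp_all
  note mm = mblk_mult[OF L'c Lc]
  show "mblk Z X (L' * L) 0 0 = mblk Z Y L' 0 0 * mblk Y X L 0 0"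
    using mm[of 0 0] Lz Lz' L'z L'z' by (simp add: addz)
  show "mblk Z X (L' * L) 1 1 = mblk Z X (L' * L) 0 0"
    using mm[of 0 0] mm[of 1 1] Lz Lz' L'z L'z' by (simp add: addz zadd)
  show "mblk Z X (L' * L) 0 1 = 0\<^sub>m (nC Z) (nC X)"
    using mm[of 0 1] Lz Lz' L'z L'z' by (simp add: addz zadd)
  show "mblk Z X (L' * L) 0 2 = 0\<^sub>m (nC Z) (nR X)"
    using mm[of 0 2] Lz Lz' L'z L'z' by (simp add: addz zadd)
  show "mblk Z X (L' * L) 2 1 = 0\<^sub>m (nR Z) (nC X)"
    using mm[of 2 1] Lz Lz' L'z L'z' by (simp add: addz zadd)
  show "mu_of X Z (L' * L) = mu_of Y Z L' * mblk Y X L 0 0 + mblk Z Y L' 0 0 * mu_of X Y L + Delta2_of Y Z L' * Delta1_of X Y L"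
    using mm[of 1 0] Lz Lz' L'z L'z' by (simp add: mu_of_def Delta2_of_def Delta1_of_def)
  show "Delta1_of X Z (L' * L) = Delta1_of Y Z L' * mblk Y X L 0 0 + rho_of Y Z L' * Delta1_of X Y L"
    using mm[of 2 0] Lz Lz' L'z L'z' by (simp add: rho_of_def Delta1_of_def addz)
  show "Delta2_of X Z (L' * L) = mblk Z Y L' 0 0 * Delta2_of X Y L + Delta2_of Y Z L' * rho_of X Y L"
    using mm[of 1 2] Lz Lz' L'z L'z' by (simp add: rho_of_def Delta2_of_def zadd)
  show "rho_of X Z (L' * L) = rho_of Y Z L' * rho_of X Y L"
    using mm[of 2 2] Lz Lz' L'z L'z' by (simp add: rho_of_def zadd)
qed

lemma comp_sm:
  assumes sm1: "S_morphism k X Y L" and sm2: "S_morphism k' Y Z L'"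
  shows "S_morphism (k + k') X Z (L' * L)"
proof -
  have Lc: "L \<in> carrier_mat (2 * nC Y + nR Y) (2 * nC X + nR X)"
    using sm1 by (simp add: S_morphism_def graded_map_def)
  have L'c: "L' \<in> carrier_mat (2 * nC Z + nR Z) (2 * nC Y + nR Y)"
    using sm2 by (simp add: S_morphism_def graded_map_def)
  have ScX: "S_complex X" and ScY: "S_complex Y" and ScZ: "S_complex Z" using sm1 sm2 by (simp_all add: S_morphism_def)
  have DX: "dif X \<in> carrier_mat (2 * nC X + nR X) (2 * nC X + nR X)" by (rule Sc_carrier[OF ScX])
  have DY: "dif Y \<in> carrier_mat (2 * nC Y + nR Y) (2 * nC Y + nR Y)" by (rule Sc_carrier[OF ScY])
  have DZ: "dif Z \<in> carrier_mat (2 * nC Z + nR Z) (2 * nC Z + nR Z)" by (rule Sc_carrier[OF ScZ])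
  have c1: "dif Y * L = L * dif X" and c2: "dif Z * L' = L' * dif Y" using sm1 sm2 by (simp_all add: S_morphism_def)
  have g: "graded_map (k + k') (totdeg X) (totdeg Z) (L' * L)"
    using graded_mult[of k "totdeg X" "totdeg Y" L k' "totdeg Z" L'] sm1 sm2 by (simp add: S_morphism_def)
  have "dif Z * (L' * L) = dif Z * L' * L" using DZ L'c Lc by simp
  also have "\<dots> = L' * dif Y * L" using c2 by simp
  also have "\<dots> = L' * (dif Y * L)" using DY L'c Lc by simp
  also have "\<dots> = L' * (L * dif X)" using c1 by simp
  also have "\<dots> = L' * L * dif X" using DX L'c Lc by simp
  finally have cm: "dif Z * (L' * L) = L' * L * dif X" .
  show ?thesis unfolding S_morphism_def
    using ScX ScZ g cm comp_blocks[OF sm1 sm2] by simp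
qed

lemma tau_TT:
  assumes sm: "S_morphism k X Y L" and rpX: "r_perfect X" and rpY: "r_perfect Y"
  shows "tau i X Y L = TT (delta1_of Y) (v_of Y) (Delta2_of X Y L) (Delta1_of X Y L) (v_of X) (delta2_of X) (mu_of X Y L) (rho_of X Y L) i"
proof -
  interpret m: mora "nC X" "nR X" "d_of X" "v_of X" "delta1_of X" "delta2_of X" "nC Y" "nR Y" "d_of Y" "v_of Y"
     "delta1_of Y" "delta2_of Y" "mblk Y X L 0 0" "mu_of X Y L" "Delta1_of X Y L" "Delta2_of X Y L" "rho_of X Y L"
    by (rule sm_mora[OF sm rpX rpY])
  show ?thesis
  proof (cases i)
    case 0 then show ?thesis by simp
  next
    case (Suc j)
    show ?thesis unfolding Suc m.T_Suc by (simp add: msum_def)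
  qed
qed

lemma tau_dims:
  assumes sm: "S_morphism k X Y L" and rpX: "r_perfect X" and rpY: "r_perfect Y"
  shows "tau i X Y L \<in> carrier_mat (nR Y) (nR X)"
proof -
  interpret m: mora "nC X" "nR X" "d_of X" "v_of X" "delta1_of X" "delta2_of X" "nC Y" "nR Y" "d_of Y" "v_of Y"
     "delta1_of Y" "delta2_of Y" "mblk Y X L 0 0" "mu_of X Y L" "Delta1_of X Y L" "Delta2_of X Y L" "rho_of X Y L"
    by (rule sm_mora[OF sm rpX rpY])
  show ?thesis unfolding tau_TT[OF sm rpX rpY] by (rule m.T_c)
qed

lemma tau_comp:
  assumes sm1: "S_morphism k X Y L" and sm2: "S_morphism k' Y Z L'"
    and rpX: "r_perfect X" and rpY: "r_perfect Y" and rpZ: "r_perfect Z"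
  shows "tau i X Z (L' * L) = msum (nR Z) (nR X) (\<lambda>j. tau j Y Z L' * tau (i - j) X Y L) {..i}"
proof -
  have m1: "mora (nC X) (nR X) (d_of X) (v_of X) (delta1_of X) (delta2_of X) (nC Y) (nR Y) (d_of Y) (v_of Y)
     (delta1_of Y) (delta2_of Y) (mblk Y X L 0 0) (mu_of X Y L) (Delta1_of X Y L) (Delta2_of X Y L) (rho_of X Y L)"
    by (rule sm_mora[OF sm1 rpX rpY])
  have m2: "mora (nC Y) (nR Y) (d_of Y) (v_of Y) (delta1_of Y) (delta2_of Y) (nC Z) (nR Z) (d_of Z) (v_of Z)
     (delta1_of Z) (delta2_of Z) (mblk Z Y L' 0 0) (mu_of Y Z L') (Delta1_of Y Z L') (Delta2_of Y Z L') (rho_of Y Z L')"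
    by (rule sm_mora[OF sm2 rpY rpZ])
  interpret c: comp3 "nC X" "nR X" "d_of X" "v_of X" "delta1_of X" "delta2_of X" "nC Y" "nR Y" "d_of Y" "v_of Y"
     "delta1_of Y" "delta2_of Y" "nC Z" "nR Z" "d_of Z" "v_of Z" "delta1_of Z" "delta2_of Z"
     "mblk Y X L 0 0" "mu_of X Y L" "Delta1_of X Y L" "Delta2_of X Y L" "rho_of X Y L"
     "mblk Z Y L' 0 0" "mu_of Y Z L'" "Delta1_of Y Z L'" "Delta2_of Y Z L'" "rho_of Y Z L'"
    unfolding comp3_def using m1 m2 by blast
  have smN: "S_morphism (k + k') X Z (L' * L)" by (rule comp_sm[OF sm1 sm2])
  have "tau i X Z (L' * L) = c.TN i"
    unfolding tau_TT[OF smN rpX rpZ] comp_blocks[OF sm1 sm2] by simp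
  also have "\<dots> = msum (nR Z) (nR X) (\<lambda>j. c.TM j * c.TL (i - j)) {..i}" by (rule c.lemMain)
  also have "\<dots> = msum (nR Z) (nR X) (\<lambda>j. tau j Y Z L' * tau (i - j) X Y L) {..i}"
    unfolding tau_TT[OF sm1 rpX rpY] tau_TT[OF sm2 rpY rpZ] by simp
  finally show ?thesis .
qed


lemma iso_mult:
  assumes A: "A \<in> carrier_mat p q" and B: "B \<in> carrier_mat q s" and iA: "iso_mat A" and iB: "iso_mat B"
  shows "iso_mat (A * B)"
proof -
  obtain A' where A': "A' \<in> carrier_mat q p" "A * A' = 1\<^sub>m p" "A' * A = 1\<^sub>m q"
    using iA A unfolding iso_mat_def by auto
  obtain B' where B': "B' \<in> carrier_mat s q" "B * B' = 1\<^sub>m q" "B' * B = 1\<^sub>m s"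
    using iB B unfolding iso_mat_def by auto
  have BA: "B' * A' \<in> carrier_mat s p" using A' B' by auto
  have AB: "A * B \<in> carrier_mat p s" using A B by auto
  have "A * B * (B' * A') = A * (B * (B' * A'))" by (rule assoc_mult_mat[OF A B BA])
  also have "B * (B' * A') = B * B' * A'" by (rule assoc_mult_mat[symmetric, OF B B'(1) A'(1)])
  also have "\<dots> = A'" using B'(2) A'(1) by simp
  finally have h1: "A * B * (B' * A') = 1\<^sub>m p" using A'(2) by simp
  have "B' * A' * (A * B) = B' * (A' * (A * B))" by (rule assoc_mult_mat[OF B'(1) A'(1) AB])
  also have "A' * (A * B) = A' * A * B" by (rule assoc_mult_mat[symmetric, OF A'(1) A B])
  also have "\<dots> = B" using A'(3) B by simp
  finally have h2: "B' * A' * (A * B) = 1\<^sub>m s" using B'(3) by simp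
  show ?thesis unfolding iso_mat_def
    using h1 h2 A B A' B' by (intro bexI[of _ "B' * A'"]) auto
qed

theorem lemma2p15:
  fixes X Y Z :: "'a :: comm_ring_1 scx"
    and L L' :: "'a mat"
    and n m :: nat
  assumes "r_perfect X" and "r_perfect Y" and "r_perfect Z"
    and "height_mor n X Y L"
    and "height_mor m Y Z L'"
  shows "height_mor (n + m) X Z (L' * L) \<and>
         (strong_height_mor n X Y L \<and> strong_height_mor m Y Z L'
            \<longrightarrow> strong_height_mor (n + m) X Z (L' * L))"
proof -
  note rpX = assms(1) and rpY = assms(2) and rpZ = assms(3)
  obtain k where k: "even k" "S_morphism k X Y L" and z1: "\<And>j. j < n \<Longrightarrow> tau j X Y L = 0\<^sub>m (nR Y) (nR X)"
    using assms(4) unfolding height_mor_def by auto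
  obtain k' where k': "even k'" "S_morphism k' Y Z L'" and z2: "\<And>j. j < m \<Longrightarrow> tau j Y Z L' = 0\<^sub>m (nR Z) (nR Y)"
    using assms(5) unfolding height_mor_def by auto
  have smN: "S_morphism (k + k') X Z (L' * L)" by (rule comp_sm[OF k(2) k'(2)])
  have tc1: "\<And>j. tau j X Y L \<in> carrier_mat (nR Y) (nR X)" by (rule tau_dims[OF k(2) rpX rpY])
  have tc2: "\<And>j. tau j Y Z L' \<in> carrier_mat (nR Z) (nR Y)" by (rule tau_dims[OF k'(2) rpY rpZ])
  have prod0: "tau j Y Z L' * tau (i - j) X Y L = 0\<^sub>m (nR Z) (nR X)" if "i < n + m" "j \<le> i" for i j
  proof (cases "j < m")
    case True
    then show ?thesis using z2[OF True] tc1[of "i - j"] by simp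
  next
    case False
    then have "i - j < n" using that by linarith
    then show ?thesis using z1[of "i - j"] tc2[of j] by simp
  qed
  have H: "height_mor (n + m) X Z (L' * L)"
    unfolding height_mor_def
  proof (intro conjI allI impI)
    show "\<exists>k. even k \<and> S_morphism k X Z (L' * L)" using smN k(1) k'(1) by (intro exI[of _ "k + k'"]) auto
    fix i assume i: "i < n + m"
    show "tau i X Z (L' * L) = 0\<^sub>m (nR Z) (nR X)"
      unfolding tau_comp[OF k(2) k'(2) rpX rpY rpZ]
      by (rule msum_zero) (use prod0 i in auto)
  qed (use rpX rpZ in auto)
  have S: "strong_height_mor (n + m) X Z (L' * L)"
    if s1: "strong_height_mor n X Y L" and s2: "strong_height_mor m Y Z L'"
  proof -
    have i1: "iso_mat (tau n X Y L)" and i2: "iso_mat (tau m Y Z L')"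
      using s1 s2 by (simp_all add: strong_height_mor_def)
    have "tau (n + m) X Z (L' * L) = tau m Y Z L' * tau (n + m - m) X Y L"
      unfolding tau_comp[OF k(2) k'(2) rpX rpY rpZ]
    proof (rule msum_single)
      show "tau m Y Z L' * tau (n + m - m) X Y L \<in> carrier_mat (nR Z) (nR X)"
        using tc1[of "n + m - m"] tc2[of m] by (auto intro!: carrier_matI)
      fix j assume j: "j \<in> {..n + m}" "j \<noteq> m"
      show "tau j Y Z L' * tau (n + m - j) X Y L = 0\<^sub>m (nR Z) (nR X)"
      proof (cases "j < m")
        case True
        then show ?thesis using z2[OF True] tc1[of "n + m - j"] by simp
      next
        case False
        then have "n + m - j < n" using j by auto
        then show ?thesis using z1[of "n + m - j"] tc2[of j] by simp
      qed
    qed auto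
    then have "tau (n + m) X Z (L' * L) = tau m Y Z L' * tau n X Y L" by simp
    moreover have "iso_mat (tau m Y Z L' * tau n X Y L)"
      by (rule iso_mult[OF tc2 tc1 i2 i1])
    ultimately show ?thesis using H by (simp add: strong_height_mor_def)
  qed
  show ?thesis using H S by blast
qed

end
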